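(* Let $G$ be a Tanner graph with largest right (check-node) degree $d_r^+$ and $t$-value $t$, so every irreducible lift-realizable pseudocodeword $p=(p_1,\dots,p_n)$ of $G$ has $0\le p_i\le t$. Then the smallest lift degree $m_{\min}$ needed to realize all irreducible pseudocodewords of $G$ satisfies \[ m_{\min}\le \max_{u_j}\frac{\sum_{v_i\in N(u_j)}p_i}{2}\le \frac{t\,d_r^+}{2},\] where the maximum is over all check nodes $u_j$ of $G$ and $N(u_j)$ is the set of variable-node neighbours of $u_j$ (for each irreducible pseudocodeword $p$, the middle quantity bounds the smallest degree of a lift realizing $p$).
   Context: A Tanner graph $G$ is a finite bipartite graph with variable nodes $v_1,\dots,v_n$ and check nodes $u_1,\dots,u_m$; it defines the binary code of all $x\in\{0,1\}^n$ such that every check node has an even number of neighbours $v_i$ with $x_i=1$. A degree-$\ell$ lift of $G$ replaces each node by a cloud of $\ell$ copies and each edge $(x,y)$ by a perfect matching between the clouds. A lift-realizable pseudocodeword $p\in\mathbb{Z}_{\ge0}^n$ is obtained from a codeword of the code of some finite lift by letting $p_i$ be the number of copies of $v_i$ assigned 1; $p$ is realized in that lift. A pseudocodeword is irreducible if it cannot be written as a sum of two or more nonzero codewords or pseudocodewords. The $t$-value of $G$ is the maximum component value of an irreducible pseudocodeword of $G$. *)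

theory Defs
  imports Complex_Main
begin

(* A Tanner graph with variable nodes v_0..v_{n-1} (indices i < n) and check nodes
   u_0..u_{m-1} (indices j < m); E i j means v_i is adjacent to u_j.
   Everything below only looks at E on i < n, j < m. *)

(* A degree-l lift: every edge (v_i,u_j) is replaced by a perfect matching between the
   cloud {(i,a). a < l} and the cloud {(j,b). b < l}, given by the permutation \<pi> i j:
   copy (i,a) is joined to copy (j, \<pi> i j a). *)
definition is_lift :: "nat \<Rightarrow> nat \<Rightarrow> (nat \<Rightarrow> nat \<Rightarrow> bool) \<Rightarrow> nat \<Rightarrow> (nat \<Rightarrow> nat \<Rightarrow> nat \<Rightarrow> nat) \<Rightarrow> bool" where
  "is_lift n m E l \<pi> \<longleftrightarrow> (\<forall>i<n. \<forall>j<m. E i j \<longrightarrow> bij_betw (\<pi> i j) {..<l} {..<l})"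

(* x i a = value of copy a of v_i; every check copy (j,b) has an even number of
   neighbours with value 1. *)
definition lift_codeword :: "nat \<Rightarrow> nat \<Rightarrow> (nat \<Rightarrow> nat \<Rightarrow> bool) \<Rightarrow> nat \<Rightarrow> (nat \<Rightarrow> nat \<Rightarrow> nat \<Rightarrow> nat) \<Rightarrow> (nat \<Rightarrow> nat \<Rightarrow> bool) \<Rightarrow> bool" where
  "lift_codeword n m E l \<pi> x \<longleftrightarrow>
     (\<forall>j<m. \<forall>b<l. even (card {(i, a). i < n \<and> a < l \<and> E i j \<and> \<pi> i j a = b \<and> x i a}))"

definition realized_in :: "nat \<Rightarrow> nat \<Rightarrow> (nat \<Rightarrow> nat \<Rightarrow> bool) \<Rightarrow> nat \<Rightarrow> (nat \<Rightarrow> nat \<Rightarrow> nat \<Rightarrow> nat) \<Rightarrow> (nat \<Rightarrow> nat) \<Rightarrow> bool" where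
  "realized_in n m E l \<pi> p \<longleftrightarrow> is_lift n m E l \<pi> \<and>
     (\<exists>x. lift_codeword n m E l \<pi> x \<and>
          (\<forall>i. p i = (if i < n then card {a. a < l \<and> x i a} else 0)))"

definition pseudocodeword :: "nat \<Rightarrow> nat \<Rightarrow> (nat \<Rightarrow> nat \<Rightarrow> bool) \<Rightarrow> (nat \<Rightarrow> nat) \<Rightarrow> bool" where
  "pseudocodeword n m E p \<longleftrightarrow> (\<exists>l \<pi>. 1 \<le> l \<and> realized_in n m E l \<pi> p)"

definition irreducible_pcw :: "nat \<Rightarrow> nat \<Rightarrow> (nat \<Rightarrow> nat \<Rightarrow> bool) \<Rightarrow> (nat \<Rightarrow> nat) \<Rightarrow> bool" where
  "irreducible_pcw n m E p \<longleftrightarrow> pseudocodeword n m E p \<and> p \<noteq> (\<lambda>_. 0) \<and>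
     \<not> (\<exists>qs. 2 \<le> length qs \<and> (\<forall>q\<in>set qs. pseudocodeword n m E q \<and> q \<noteq> (\<lambda>_. 0)) \<and>
            p = (\<lambda>i. \<Sum>q\<leftarrow>qs. q i))"

definition max_check_degree :: "nat \<Rightarrow> nat \<Rightarrow> (nat \<Rightarrow> nat \<Rightarrow> bool) \<Rightarrow> nat" where
  "max_check_degree n m E = Max ((\<lambda>j. card {i. i < n \<and> E i j}) ` {..<m})"

definition max_check_sum :: "nat \<Rightarrow> nat \<Rightarrow> (nat \<Rightarrow> nat \<Rightarrow> bool) \<Rightarrow> (nat \<Rightarrow> nat) \<Rightarrow> nat" where
  "max_check_sum n m E p = Max ((\<lambda>j. \<Sum>i\<in>{i. i < n \<and> E i j}. p i) ` {..<m})"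

definition min_lift_degree :: "nat \<Rightarrow> nat \<Rightarrow> (nat \<Rightarrow> nat \<Rightarrow> bool) \<Rightarrow> (nat \<Rightarrow> nat) \<Rightarrow> nat" where
  "min_lift_degree n m E p = (LEAST l. 1 \<le> l \<and> (\<exists>\<pi>. realized_in n m E l \<pi> p))"

definition m_min :: "nat \<Rightarrow> nat \<Rightarrow> (nat \<Rightarrow> nat \<Rightarrow> bool) \<Rightarrow> nat" where
  "m_min n m E = (LEAST l. 1 \<le> l \<and>
     (\<forall>p. irreducible_pcw n m E p \<longrightarrow> (\<exists>\<pi>. realized_in n m E l \<pi> p)))"

end

theory Submission
  imports Defs
begin

lemma concat_bij:
  fixes P :: "nat \<Rightarrow> bool" and f :: "nat \<Rightarrow> nat"
  shows "bij_betw (\<lambda>(i,a). (\<Sum>k\<in>{k. k<i \<and> P k}. f k) + a)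
           (SIGMA i:{i. i<n \<and> P i}. {..<f i}) {..<(\<Sum>k\<in>{k. k<n \<and> P k}. f k)}"
proof (induction n)
  case 0 show ?case by (simp add: bij_betw_def)
next
  case (Suc n)
  show ?case
  proof (cases "P n")
    case False
    then have "{i. i<Suc n \<and> P i} = {i. i<n \<and> P i}" by (auto simp: less_Suc_eq)
    with Suc show ?thesis by simp
  next
    case True
    define Ofs where "Ofs = (\<Sum>k\<in>{k. k<n \<and> P k}. f k)"
    have e1: "{i. i<Suc n \<and> P i} = insert n {i. i<n \<and> P i}" using True by (auto simp: less_Suc_eq)
    have sumS: "(\<Sum>k\<in>{k. k<Suc n \<and> P k}. f k) = Ofs + f n" unfolding e1 Ofs_def by (simp add: add.commute)
    have sig: "(SIGMA i:{i. i<Suc n \<and> P i}. {..<f i}) = (SIGMA i:{i. i<n \<and> P i}. {..<f i}) \<union> ({n} \<times> {..<f n})"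
      by (auto simp: e1)
    have b2: "bij_betw (\<lambda>(i,a). (\<Sum>k\<in>{k. k<i \<and> P k}. f k) + a) ({n} \<times> {..<f n}) {Ofs..<Ofs+f n}"
    proof -
      have "inj_on (\<lambda>(i,a). (\<Sum>k\<in>{k. k<i \<and> P k}. f k) + a) ({n} \<times> {..<f n})"
        by (auto simp: inj_on_def)
      moreover have "(\<lambda>(i,a). (\<Sum>k\<in>{k. k<i \<and> P k}. f k) + a) ` ({n} \<times> {..<f n}) = {Ofs..<Ofs+f n}"
      proof
        show "(\<lambda>(i,a). (\<Sum>k\<in>{k. k<i \<and> P k}. f k) + a) ` ({n} \<times> {..<f n}) \<subseteq> {Ofs..<Ofs+f n}"
          by (auto simp: Ofs_def)
        show "{Ofs..<Ofs+f n} \<subseteq> (\<lambda>(i,a). (\<Sum>k\<in>{k. k<i \<and> P k}. f k) + a) ` ({n} \<times> {..<f n})"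
        proof
          fix s assume s: "s \<in> {Ofs..<Ofs+f n}"
          then have "s = (\<lambda>(i,a). (\<Sum>k\<in>{k. k<i \<and> P k}. f k) + a) (n, s - Ofs)" by (auto simp: Ofs_def)
          moreover have "(n, s - Ofs) \<in> {n} \<times> {..<f n}" using s by auto
          ultimately show "s \<in> (\<lambda>(i,a). (\<Sum>k\<in>{k. k<i \<and> P k}. f k) + a) ` ({n} \<times> {..<f n})" by blast
        qed
      qed
      ultimately show ?thesis by (simp add: bij_betw_def)
    qed
    have "bij_betw (\<lambda>(i,a). (\<Sum>k\<in>{k. k<i \<and> P k}. f k) + a)
           ((SIGMA i:{i. i<n \<and> P i}. {..<f i}) \<union> ({n} \<times> {..<f n})) ({..<Ofs} \<union> {Ofs..<Ofs+f n})"
      by (rule bij_betw_combine[OF Suc.IH[folded Ofs_def] b2]) auto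
    moreover have "{..<Ofs} \<union> {Ofs..<Ofs+f n} = {..<Ofs + f n}" by auto
    ultimately show ?thesis by (simp add: sig sumS)
  qed
qed


lemma local_cond:
  assumes R: "realized_in n m E l \<pi> p" and j: "j<m"
  shows "even (sum p {i. i<n \<and> E i j})"
    and "\<And>i0. i0<n \<Longrightarrow> E i0 j \<Longrightarrow> 2 * p i0 \<le> sum p {i. i<n \<and> E i j}"
proof -
  have L: "is_lift n m E l \<pi>" using R by (simp add: realized_in_def)
  obtain x where lc: "lift_codeword n m E l \<pi> x"
    and pd: "\<forall>i. p i = (if i < n then card {a. a < l \<and> x i a} else 0)"
    using R by (auto simp: realized_in_def)
  define N where "N = {i. i<n \<and> E i j}"
  define T where "T = {(i,a). i<n \<and> a<l \<and> E i j \<and> x i a}"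
  define c where "c b = card {(i,a). i<n \<and> a<l \<and> E i j \<and> \<pi> i j a = b \<and> x i a}" for b
  have ceven: "even (c b)" if "b<l" for b using lc j that by (simp add: lift_codeword_def c_def)
  have T_eq: "T = Sigma N (\<lambda>i. {a. a<l \<and> x i a})" by (auto simp: T_def N_def)
  have fN: "finite N" by (simp add: N_def)
  have fT: "finite T" unfolding T_eq using fN by auto
  have cardT: "card T = sum p N"
    unfolding T_eq using fN by (simp add: pd N_def)
  have img: "\<pi> i j a < l" if "i<n" "E i j" "a<l" for i a
    using L j that unfolding is_lift_def by (meson bij_betwE lessThan_iff)
  have grp: "card T = (\<Sum>b<l. c b)"
  proof -
    have "(\<Sum>b<l. \<Sum>t\<in>{t. t\<in>T \<and> (\<lambda>(i,a). \<pi> i j a) t = b}. (1::nat)) = (\<Sum>t\<in>T. 1)"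
      by (rule sum.group[OF fT]) (auto simp: T_def img)
    moreover have "{t. t\<in>T \<and> (\<lambda>(i,a). \<pi> i j a) t = b} = {(i,a). i<n \<and> a<l \<and> E i j \<and> \<pi> i j a = b \<and> x i a}" for b
      by (auto simp: T_def)
    ultimately show ?thesis by (simp add: c_def)
  qed
  show "even (sum p {i. i<n \<and> E i j})"
  proof -
    have "even (\<Sum>b<l. c b)" by (rule dvd_sum) (simp add: ceven)
    then show ?thesis using cardT grp by (simp add: N_def)
  qed
  fix i0 assume i0: "i0<n" "E i0 j"
  define dd where "dd b = card {a. a<l \<and> x i0 a \<and> \<pi> i0 j a = b}" for b
  have bij0: "bij_betw (\<pi> i0 j) {..<l} {..<l}" using L j i0 by (simp add: is_lift_def)
  have pgrp: "p i0 = (\<Sum>b<l. dd b)"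
  proof -
    have "(\<Sum>b<l. \<Sum>a\<in>{a. a\<in>{a. a<l \<and> x i0 a} \<and> \<pi> i0 j a = b}. (1::nat)) = (\<Sum>a\<in>{a. a<l \<and> x i0 a}. 1)"
      by (rule sum.group) (auto simp: img i0)
    then show ?thesis using i0 pd by (simp add: dd_def conj_assoc)
  qed
  have d1: "dd b \<le> 1" for b
  proof -
    have "inj_on (\<pi> i0 j) {..<l}" using bij0 by (simp add: bij_betw_def)
    then have "\<forall>a1\<in>{a. a<l \<and> x i0 a \<and> \<pi> i0 j a = b}. \<forall>a2\<in>{a. a<l \<and> x i0 a \<and> \<pi> i0 j a = b}. a1 = a2"
      by (auto simp: inj_on_def)
    moreover have "finite {a. a<l \<and> x i0 a \<and> \<pi> i0 j a = b}" by simp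
    ultimately show ?thesis unfolding dd_def One_nat_def using card_le_Suc0_iff_eq by blast
  qed
  have dc: "dd b \<le> c b" for b
  proof -
    have "dd b = card ((\<lambda>a. (i0,a)) ` {a. a<l \<and> x i0 a \<and> \<pi> i0 j a = b})"
      unfolding dd_def by (simp add: card_image inj_on_def)
    also have "\<dots> \<le> c b" unfolding c_def
      by (rule card_mono) (auto simp: i0 intro: finite_subset[of _ "{..<n} \<times> {..<l}"])
    finally show ?thesis .
  qed
  have d2: "2 * dd b \<le> c b" if "b<l" for b
    using d1[of b] dc[of b] ceven[OF that]
  proof (cases "dd b = 0")
    case False
    then have "dd b = 1" using d1[of b] by simp
    moreover have "c b \<noteq> 1" using ceven[OF that] by auto
    ultimately show ?thesis using dc[of b] by simp
  qed simp
  have "2 * p i0 = (\<Sum>b<l. 2 * dd b)" by (simp add: pgrp sum_distrib_left)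
  also have "\<dots> \<le> (\<Sum>b<l. c b)" by (rule sum_mono) (simp add: d2)
  finally show "2 * p i0 \<le> sum p {i. i<n \<and> E i j}" using grp cardT by (simp add: N_def)
qed


lemma mod_inj_aux:
  fixes c a a' h :: nat
  assumes "a < h" "a' < h" "(c + a) mod h = (c + a') mod h"
  shows "a = a'"
proof -
  have key: "x = y" if "y \<le> x" "x < h" "(c + x) mod h = (c + y) mod h" for x y
  proof -
    have "c + y \<le> c + x" using that by simp
    then have "h dvd (c+x) - (c+y)" using that(3) mod_eq_dvd_iff_nat by blast
    then have "h dvd x - y" by simp
    moreover have "x - y < h" using that by simp
    ultimately have "x - y = 0" using dvd_imp_le by (metis not_gr0 not_le)
    then show ?thesis using that by simp
  qed
  show ?thesis
  proof (cases "a' \<le> a")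
    case True then show ?thesis using key assms by blast
  next
    case False then show ?thesis using key[of a a'] assms by simp
  qed
qed

lemma two_mod:
  fixes b h :: nat assumes "b < h"
  shows "{s. s < 2*h \<and> s mod h = b} = {b, b+h}"
proof -
  have "s = b \<or> s = b + h" if "s < 2*h" "s mod h = b" for s
  proof (cases "s < h")
    case True then show ?thesis using that by simp
  next
    case False
    then have "s mod h = s - h" using that(1) by (simp add: le_mod_geq)
    then show ?thesis using that False by simp
  qed
  then show ?thesis using assms by auto
qed


lemma construct:
  assumes ev: "\<forall>j<m. even (sum p {i. i<n \<and> E i j})"
   and le2: "\<forall>j<m. \<forall>i<n. E i j \<longrightarrow> 2 * p i \<le> sum p {i. i<n \<and> E i j}"
   and pL: "\<forall>i<n. p i \<le> L"
   and hL: "\<forall>j<m. sum p {i. i<n \<and> E i j} div 2 \<le> L"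
   and p0: "\<forall>i. n \<le> i \<longrightarrow> p i = 0"
  shows "\<exists>\<pi>. realized_in n m E L \<pi> p"
proof -
  define S where "S j = sum p {i. i<n \<and> E i j}" for j
  define h where "h j = S j div 2" for j
  define c0 where "c0 j i = (\<Sum>k\<in>{k. k<i \<and> E k j}. p k)" for j i
  define \<pi> where "\<pi> i j a = (if a < h j then (c0 j i + a) mod h j else a)" for i j a
  define x where "x i a = (a < p i)" for i a
  have ph: "p i \<le> h j" if "j<m" "i<n" "E i j" for i j
    using le2 that unfolding h_def S_def by fastforce
  have islift: "is_lift n m E L \<pi>"
    unfolding is_lift_def
  proof (intro allI impI)
    fix i j assume ij: "i<n" "j<m" "E i j"
    have hLj: "h j \<le> L" using hL ij by (simp add: h_def S_def)
    have sub: "\<pi> i j ` {..<L} \<subseteq> {..<L}"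
    proof
      fix y assume "y \<in> \<pi> i j ` {..<L}"
      then obtain a where a: "a < L" "y = \<pi> i j a" by auto
      show "y \<in> {..<L}"
      proof (cases "a < h j")
        case True
        then have "y < h j" using a by (simp add: \<pi>_def)
        then show ?thesis using hLj by simp
      next
        case False then show ?thesis using a by (simp add: \<pi>_def)
      qed
    qed
    have inj: "inj_on (\<pi> i j) {..<L}"
    proof (rule inj_onI)
      fix a a' assume a: "a \<in> {..<L}" "a' \<in> {..<L}" and eq: "\<pi> i j a = \<pi> i j a'"
      show "a = a'"
      proof (cases "a < h j"; cases "a' < h j")
        assume "a < h j" "a' < h j"
        then show ?thesis using eq mod_inj_aux[of a "h j" a' "c0 j i"] by (simp add: \<pi>_def)
      next
        assume "a < h j" "\<not> a' < h j"
        then have "\<pi> i j a < h j" "\<pi> i j a' = a'" by (simp_all add: \<pi>_def)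
        then show ?thesis using eq \<open>\<not> a' < h j\<close> by linarith
      next
        assume "\<not> a < h j" "a' < h j"
        then have "\<pi> i j a' < h j" "\<pi> i j a = a" by (simp_all add: \<pi>_def)
        then show ?thesis using eq \<open>\<not> a < h j\<close> by linarith
      next
        assume "\<not> a < h j" "\<not> a' < h j"
        then show ?thesis using eq by (simp add: \<pi>_def)
      qed
    qed
    have "\<pi> i j ` {..<L} = {..<L}" by (rule endo_inj_surj[OF _ sub inj]) simp
    then show "bij_betw (\<pi> i j) {..<L} {..<L}" using inj by (simp add: bij_betw_def)
  qed
  have lc: "lift_codeword n m E L \<pi> x"
    unfolding lift_codeword_def
  proof (intro allI impI)
    fix j b assume j: "j<m" and b: "b<L"
    define C where "C = {(i, a). i < n \<and> a < L \<and> E i j \<and> \<pi> i j a = b \<and> x i a}"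
    define Sg where "Sg = (SIGMA i:{i. i<n \<and> E i j}. {..<p i})"
    define g where "g = (\<lambda>(i,a). (\<Sum>k\<in>{k. k<i \<and> E k j}. p k) + a)"
    have bj: "bij_betw g Sg {..<S j}"
      unfolding g_def Sg_def S_def by (rule concat_bij)
    have Cform: "C = {t\<in>Sg. g t mod h j = b}"
    proof -
      have "(i,a) \<in> C \<longleftrightarrow> (i,a) \<in> {t\<in>Sg. g t mod h j = b}" for i a
      proof
        assume "(i,a) \<in> C"
        then have "i<n" "E i j" "a < p i" "\<pi> i j a = b" by (auto simp: C_def x_def)
        moreover then have "a < h j" using ph[of j i] j by simp
        ultimately show "(i,a) \<in> {t\<in>Sg. g t mod h j = b}" by (simp add: Sg_def g_def \<pi>_def c0_def)
      next
        assume "(i,a) \<in> {t\<in>Sg. g t mod h j = b}"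
        then have "i<n" "E i j" "a < p i" "g (i,a) mod h j = b" by (auto simp: Sg_def)
        moreover then have "a < h j" using ph[of j i] j by simp
        moreover have "a < L" using pL \<open>i<n\<close> \<open>a < p i\<close> by fastforce
        ultimately show "(i,a) \<in> C" by (simp add: C_def g_def \<pi>_def c0_def x_def)
      qed
      then show ?thesis by auto
    qed
    show "even (card C)"
    proof (cases "b < h j")
      case True
      have "card C = card (g ` C)"
        using bj by (intro card_image[symmetric]) (auto simp: Cform bij_betw_def intro: inj_on_subset)
      also have "g ` C = {s. s < 2 * h j \<and> s mod h j = b}"
      proof -
        have "S j = 2 * h j" using ev j by (simp add: h_def S_def)
        then have "g ` Sg = {..<2 * h j}" using bj by (simp add: bij_betw_def)
        then show ?thesis unfolding Cform by auto
      qed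
      also have "\<dots> = {b, b + h j}" using two_mod[OF True] .
      finally have "card C = 2" using True by simp
      then show ?thesis by simp
    next
      case False
      have "C = {}"
      proof -
        have False if "t \<in> C" for t
        proof -
          obtain i a where t: "t = (i,a)" by fastforce
          then have "i<n" "E i j" "a < p i" "\<pi> i j a = b" using that by (auto simp: C_def x_def)
          moreover then have "a < h j" using ph[of j i] j by simp
          ultimately have "b < h j" by (metis \<pi>_def mod_less_divisor not_gr0 not_less0)
          then show False using False by simp
        qed
        then show ?thesis by auto
      qed
      then show ?thesis by simp
    qed
  qed
  have "\<forall>i. p i = (if i < n then card {a. a < L \<and> x i a} else 0)"
  proof
    fix i
    show "p i = (if i < n then card {a. a < L \<and> x i a} else 0)"
    proof (cases "i < n")
      case True
      then have "{a. a < L \<and> x i a} = {..<p i}" using pL by (auto simp: x_def)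
      then show ?thesis using True by simp
    next
      case False then show ?thesis using p0 by simp
    qed
  qed
  then show ?thesis using islift lc unfolding realized_in_def by blast
qed


lemma per_p:
  assumes no_isolated: "\<forall>i<n. \<exists>j<m. E i j"
    and pc: "pseudocodeword n m E p" and nz: "p \<noteq> (\<lambda>_. 0)"
  shows "2 \<le> max_check_sum n m E p"
    and "\<And>j. j<m \<Longrightarrow> sum p {i. i<n \<and> E i j} \<le> max_check_sum n m E p"
    and "\<exists>j<m. max_check_sum n m E p = sum p {i. i<n \<and> E i j}"
    and "\<And>L. max_check_sum n m E p div 2 \<le> L \<Longrightarrow> (\<exists>\<pi>. realized_in n m E L \<pi> p)"
proof -
  obtain l \<pi> where R: "realized_in n m E l \<pi> p" using pc by (auto simp: pseudocodeword_def)
  have p0: "\<forall>i. n \<le> i \<longrightarrow> p i = 0" using R by (auto simp: realized_in_def)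
  obtain i1 where i1: "p i1 \<noteq> 0" using nz by auto
  then have i1n: "i1 < n" using p0 by (meson not_le)
  then obtain j1 where j1: "j1 < m" "E i1 j1" using no_isolated by blast
  define M where "M = max_check_sum n m E p"
  have fin: "finite ((\<lambda>j. \<Sum>i\<in>{i. i < n \<and> E i j}. p i) ` {..<m})" by simp
  show SM: "\<And>j. j<m \<Longrightarrow> sum p {i. i<n \<and> E i j} \<le> max_check_sum n m E p"
    unfolding max_check_sum_def using fin by (intro Max_ge) auto
  have "max_check_sum n m E p \<in> (\<lambda>j. \<Sum>i\<in>{i. i < n \<and> E i j}. p i) ` {..<m}"
    unfolding max_check_sum_def using fin j1 by (intro Max_in) auto
  then show "\<exists>j<m. max_check_sum n m E p = sum p {i. i<n \<and> E i j}" by auto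
  have "2 * p i1 \<le> sum p {i. i<n \<and> E i j1}" using local_cond(2)[OF R j1(1) i1n j1(2)] .
  then show "2 \<le> max_check_sum n m E p" using SM[OF j1(1)] i1 by linarith
  fix L assume L: "max_check_sum n m E p div 2 \<le> L"
  show "\<exists>\<pi>. realized_in n m E L \<pi> p"
  proof (rule construct)
    show "\<forall>j<m. even (sum p {i. i<n \<and> E i j})" using local_cond(1)[OF R] by blast
    show le2: "\<forall>j<m. \<forall>i<n. E i j \<longrightarrow> 2 * p i \<le> sum p {i. i<n \<and> E i j}"
      using local_cond(2)[OF R] by blast
    show "\<forall>j<m. sum p {i. i<n \<and> E i j} div 2 \<le> L"
      using SM L div_le_mono le_trans by blast
    show "\<forall>i<n. p i \<le> L"
    proof (intro allI impI)
      fix i assume i: "i<n"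
      then obtain j where j: "j<m" "E i j" using no_isolated by blast
      have "2 * p i \<le> max_check_sum n m E p" using le2 j i SM[OF j(1)] by fastforce
      then show "p i \<le> L" using L by linarith
    qed
    show "\<forall>i. n \<le> i \<longrightarrow> p i = 0" by (rule p0)
  qed
qed

theorem theorem5:
  fixes n m :: nat and E :: "nat \<Rightarrow> nat \<Rightarrow> bool" and t :: nat
  assumes no_isolated: "\<forall>i<n. \<exists>j<m. E i j"
    and t_bound: "\<forall>p. irreducible_pcw n m E p \<longrightarrow> (\<forall>i<n. p i \<le> t)"
    and t_attained: "\<exists>p i. irreducible_pcw n m E p \<and> i < n \<and> p i = t"
  shows "(\<forall>p. irreducible_pcw n m E p \<longrightarrow>
            real (min_lift_degree n m E p) \<le> real (max_check_sum n m E p) / 2 \<and>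
            real (max_check_sum n m E p) / 2 \<le> real t * real (max_check_degree n m E) / 2)
         \<and> real (m_min n m E) \<le> real t * real (max_check_degree n m E) / 2"
proof -
  define d where "d = max_check_degree n m E"
  have Mtd: "max_check_sum n m E p \<le> t * d" if irr: "irreducible_pcw n m E p" for p
  proof -
    have pc: "pseudocodeword n m E p" "p \<noteq> (\<lambda>_. 0)" using irr by (auto simp: irreducible_pcw_def)
    obtain j where j: "j<m" "max_check_sum n m E p = sum p {i. i<n \<and> E i j}"
      using per_p(3)[OF no_isolated pc] by blast
    have "sum p {i. i<n \<and> E i j} \<le> of_nat (card {i. i<n \<and> E i j}) * t"
      using t_bound irr by (intro sum_bounded_above) auto
    then have "sum p {i. i<n \<and> E i j} \<le> card {i. i<n \<and> E i j} * t" by simp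
    moreover have "card {i. i<n \<and> E i j} \<le> d"
      unfolding d_def max_check_degree_def using j(1) by (intro Max_ge) auto
    ultimately show ?thesis using j(2) by (metis le_trans mult.commute mult_le_mono1)
  qed
  have part1: "real (min_lift_degree n m E p) \<le> real (max_check_sum n m E p) / 2 \<and>
            real (max_check_sum n m E p) / 2 \<le> real t * real d / 2"
    if irr: "irreducible_pcw n m E p" for p
  proof
    have pc: "pseudocodeword n m E p" "p \<noteq> (\<lambda>_. 0)" using irr by (auto simp: irreducible_pcw_def)
    define M where "M = max_check_sum n m E p"
    have M2: "2 \<le> M" using per_p(1)[OF no_isolated pc] by (simp add: M_def)
    obtain \<pi> where "realized_in n m E (M div 2) \<pi> p" using per_p(4)[OF no_isolated pc] M_def by blast
    moreover have "1 \<le> M div 2" using M2 by simp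
    ultimately have "min_lift_degree n m E p \<le> M div 2"
      unfolding min_lift_degree_def by (intro Least_le) blast
    then have "real (min_lift_degree n m E p) \<le> real (M div 2)" by simp
    also have "\<dots> \<le> real M / 2" by linarith
    finally show "real (min_lift_degree n m E p) \<le> real (max_check_sum n m E p) / 2" by (simp add: M_def)
    have "real M \<le> real t * real d" using Mtd[OF irr] by (simp add: M_def flip: of_nat_mult)
    then show "real (max_check_sum n m E p) / 2 \<le> real t * real d / 2" by (simp add: M_def)
  qed
  define L where "L = (t * d) div 2"
  have allreal: "\<exists>\<pi>. realized_in n m E L \<pi> p" if irr: "irreducible_pcw n m E p" for p
  proof -
    have pc: "pseudocodeword n m E p" "p \<noteq> (\<lambda>_. 0)" using irr by (auto simp: irreducible_pcw_def)
    show ?thesis using per_p(4)[OF no_isolated pc] Mtd[OF irr] unfolding L_def by (simp add: div_le_mono)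
  qed
  obtain p0 where irr0: "irreducible_pcw n m E p0" using t_attained by blast
  have pc0: "pseudocodeword n m E p0" "p0 \<noteq> (\<lambda>_. 0)" using irr0 by (auto simp: irreducible_pcw_def)
  have "1 \<le> L" using per_p(1)[OF no_isolated pc0] Mtd[OF irr0] unfolding L_def by linarith
  then have "m_min n m E \<le> L" unfolding m_min_def using allreal by (intro Least_le) blast
  then have "real (m_min n m E) \<le> real L" by simp
  also have "\<dots> \<le> real t * real d / 2" unfolding L_def by (simp flip: of_nat_mult)
  finally show ?thesis using part1 by (simp add: d_def)
qed

end
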